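(* Let $f:\mathbb{R}\to\mathbb{C}\setminus\{0\}$ be entire on $\mathbb{R}$ and let $g:\mathbb{R}\to\mathbb{C}$ be continuous with $\exp(g(x))=f(x)$ for all $x$. Then $g$ is entire on $\mathbb{R}$ if and only if the complex extension $f_c$ of $f$ does not vanish on $\mathbb{C}$.
   Context: A function $f:\mathbb{R}\to\mathbb{C}$ is entire on $\mathbb{R}$ if it equals a power series with infinite radius of convergence on $\mathbb{R}$. Its complex extension is $f_c(z)=\sum_{k\ge0}\frac{f^{(k)}(0)}{k!}z^k$, $z\in\mathbb{C}$. *)

theory Defs
  imports "HOL-Analysis.Analysis"
begin

definition entire_on_R :: "(real \<Rightarrow> complex) \<Rightarrow> bool" where
  "entire_on_R f \<longleftrightarrow> (\<exists>a::nat \<Rightarrow> complex. \<forall>x::real. (\<lambda>k. a k * (complex_of_real x) ^ k) sums f x)"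

definition nth_vderiv :: "nat \<Rightarrow> (real \<Rightarrow> complex) \<Rightarrow> real \<Rightarrow> complex" where
  "nth_vderiv k f = ((\<lambda>g x. vector_derivative g (at x)) ^^ k) f"

definition complex_ext :: "(real \<Rightarrow> complex) \<Rightarrow> complex \<Rightarrow> complex" where
  "complex_ext f z = (\<Sum>k. nth_vderiv k f 0 / of_nat (fact k) * z ^ k)"

end

theory Submission
  imports Defs "HOL-Complex_Analysis.Complex_Analysis"
begin

lemma restr_deriv:
  assumes "F holomorphic_on UNIV"
  shows "nth_vderiv k (\<lambda>x. F (of_real x)) = (\<lambda>x. (deriv ^^ k) F (of_real x))"
proof (induction k)
  case 0
  then show ?case by (simp add: nth_vderiv_def)
next
  case (Suc k)
  have hol: "(deriv ^^ k) F holomorphic_on UNIV"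
    using assms by (intro holomorphic_higher_deriv) auto
  have "nth_vderiv (Suc k) (\<lambda>x. F (of_real x))
        = (\<lambda>x. vector_derivative (nth_vderiv k (\<lambda>x. F (of_real x))) (at x))"
    by (simp add: nth_vderiv_def)
  also have "\<dots> = (\<lambda>x. vector_derivative (\<lambda>x. (deriv ^^ k) F (of_real x)) (at x))"
    using Suc by simp
  also have "\<dots> = (\<lambda>x. (deriv ^^ Suc k) F (of_real x))"
  proof
    fix x :: real
    have "((deriv ^^ k) F has_field_derivative deriv ((deriv ^^ k) F) (of_real x)) (at (of_real x))"
      using hol by (intro holomorphic_derivI[of _ UNIV]) auto
    then have "((\<lambda>x. (deriv ^^ k) F (of_real x)) has_vector_derivative deriv ((deriv ^^ k) F) (of_real x)) (at x)"
      by (rule has_vector_derivative_real_field)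
    then show "vector_derivative (\<lambda>x. (deriv ^^ k) F (of_real x)) (at x) = (deriv ^^ Suc k) F (of_real x)"
      by (simp add: vector_derivative_at)
  qed
  finally show ?case .
qed

lemma entire_ext:
  assumes "entire_on_R f"
  obtains F where "F holomorphic_on UNIV" "\<And>x. F (of_real x) = f x"
proof -
  obtain a where a: "\<And>x. (\<lambda>k. a k * (complex_of_real x) ^ k) sums f x"
    using assms unfolding entire_on_R_def by blast
  have cr: "conv_radius a \<ge> \<infinity>"
    by (rule conv_radius_geI_ex') (use a sums_summable in blast)
  define F where "F = (\<lambda>z. \<Sum>n. a n * z ^ n)"
  have "F holomorphic_on UNIV"
    unfolding holomorphic_on_def field_differentiable_def F_def
  proof
    fix x :: complex
    have "ereal (norm x) < conv_radius a" using cr by (cases "conv_radius a") auto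
    then show "\<exists>f'. ((\<lambda>z. \<Sum>n. a n * z ^ n) has_field_derivative f') (at x within UNIV)"
      using has_field_derivative_powser by blast
  qed
  moreover have "\<And>x. F (of_real x) = f x"
    unfolding F_def using a sums_unique by metis
  ultimately show ?thesis using that by blast
qed

lemma holo_entire:
  assumes "F holomorphic_on UNIV"
  shows "entire_on_R (\<lambda>x. F (of_real x))"
  unfolding entire_on_R_def
proof (intro exI allI)
  fix x :: real
  have "((\<lambda>n. (deriv ^^ n) F 0 / (fact n) * (of_real x - 0)^n) sums F (of_real x))"
    by (rule holomorphic_power_series[where r = "norm (complex_of_real x) + 1"])
       (use assms holomorphic_on_subset in auto)
  then show "(\<lambda>k. (deriv ^^ k) F 0 / (fact k) * complex_of_real x ^ k) sums F (of_real x)"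
    by simp
qed

lemma cext:
  assumes "F holomorphic_on UNIV" "\<And>x. F (of_real x) = f x"
  shows "complex_ext f z = F z"
proof -
  have fe: "f = (\<lambda>x. F (of_real x))" using assms(2) by auto
  have "((\<lambda>n. (deriv ^^ n) F 0 / (fact n) * (z - 0)^n) sums F z)"
    by (rule holomorphic_power_series[where r = "norm z + 1"])
       (use assms holomorphic_on_subset in auto)
  then have "(\<lambda>n. nth_vderiv n f 0 / of_nat (fact n) * z ^ n) sums F z"
    unfolding fe restr_deriv[OF assms(1)] by simp
  then show ?thesis unfolding complex_ext_def by (rule sums_unique[symmetric])
qed

theorem lemmaB3:
  fixes f g :: "real \<Rightarrow> complex"
  assumes "entire_on_R f"
    and "\<forall>x. f x \<noteq> 0"
    and "continuous_on UNIV g"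
    and "\<forall>x. exp (g x) = f x"
  shows "entire_on_R g \<longleftrightarrow> (\<forall>z. complex_ext f z \<noteq> 0)"
proof -
  obtain F where F: "F holomorphic_on UNIV" "\<And>x. F (of_real x) = f x"
    using entire_ext[OF assms(1)] by blast
  have ce: "\<And>z. complex_ext f z = F z" using cext[OF F] .
  show ?thesis
  proof
    assume "entire_on_R g"
    then obtain G where G: "G holomorphic_on UNIV" "\<And>x. G (of_real x) = g x"
      using entire_ext by blast
    have hol: "(\<lambda>z. F z - exp (G z)) holomorphic_on UNIV"
      using F G by (intro holomorphic_intros) auto
    have lim: "0 islimpt range complex_of_real"
      unfolding islimpt_approachable
    proof (intro allI impI)
      fix e :: real assume "e > 0"
      then show "\<exists>x'\<in>range complex_of_real. x' \<noteq> 0 \<and> dist x' 0 < e"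
        by (intro bexI[of _ "of_real (e/2)"] rangeI) auto
    qed
    have "F z - exp (G z) = 0" for z
      by (rule analytic_continuation[OF hol _ _ _ _ lim]) (use F G assms(4) in auto)
    then show "\<forall>z. complex_ext f z \<noteq> 0" using ce by simp
  next
    assume nz: "\<forall>z. complex_ext f z \<noteq> 0"
    obtain H where H: "H holomorphic_on UNIV" "\<And>z. F z = exp (H z)"
    proof (rule contractible_imp_holomorphic_log[OF F(1) contractible_UNIV])
      fix z :: complex show "F z \<noteq> 0" using nz ce by simp
    qed blast
    define d where "d = (\<lambda>x. g x - H (of_real x))"
    have contH: "continuous_on UNIV (\<lambda>x::real. H (of_real x))"
      by (intro continuous_on_compose2[OF holomorphic_on_imp_continuous_on[OF H(1)]]
            continuous_intros) auto
    have contd: "continuous_on UNIV d"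
      unfolding d_def by (intro continuous_intros assms(3) contH)
    have dk: "\<exists>n::int. d x = of_int (2 * n) * pi * \<i>" for x
    proof -
      have "exp (g x) = exp (H (of_real x))" using assms(4) F(2)[of x] H(2)[of "of_real x"] by simp
      then obtain n :: int where "g x = H (of_real x) + of_int (2 * n) * pi * \<i>"
        unfolding exp_eq by blast
      then show ?thesis unfolding d_def by auto
    qed
    have "d constant_on UNIV"
    proof (rule continuous_discrete_range_constant[OF connected_UNIV contd])
      fix x :: real
      show "\<exists>e>0. \<forall>y. y \<in> UNIV \<and> d y \<noteq> d x \<longrightarrow> e \<le> norm (d y - d x)"
      proof (intro exI[of _ "2*pi"] conjI allI impI)
        fix y assume "y \<in> UNIV \<and> d y \<noteq> d x"
        then have ne: "d y \<noteq> d x" by simp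
        obtain n m :: int where n: "d x = of_int (2 * n) * pi * \<i>" and m: "d y = of_int (2 * m) * pi * \<i>"
          using dk by metis
        have "m \<noteq> n" using ne n m by auto
        then have "1 \<le> \<bar>real_of_int (m - n)\<bar>" by linarith
        have "norm (d y - d x) = 2 * pi * \<bar>real_of_int (m - n)\<bar>"
        proof -
          have "d y - d x = \<i> * complex_of_real (2 * pi * of_int (m - n))"
            unfolding n m by (simp add: algebra_simps)
          then have "norm (d y - d x) = \<bar>2 * pi * real_of_int (m - n)\<bar>"
            by (simp only: norm_mult norm_ii mult_1_left norm_of_real)
          then show ?thesis by (simp add: abs_mult)
        qed
        also have "\<dots> \<ge> 2 * pi" using \<open>1 \<le> _\<close> by (simp add: pi_gt_zero)
        finally show "2 * pi \<le> norm (d y - d x)" .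
      qed (simp add: pi_gt_zero)
    qed
    then obtain c where c: "\<And>x. d x = c" unfolding constant_on_def by blast
    have "(\<lambda>z. H z + c) holomorphic_on UNIV" using H(1) by (intro holomorphic_intros) auto
    from holo_entire[OF this] have "entire_on_R (\<lambda>x. H (of_real x) + c)" .
    moreover have "(\<lambda>x. H (of_real x) + c) = g" using c unfolding d_def by (auto simp: algebra_simps)
    ultimately show "entire_on_R g" by simp
  qed
qed

end
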